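(* Let $1\le i\le n$ and $\varphi\in\mathcal{I}_1^{i+}=C([-\bar\tau_l^i,0],\mathbb{R}_+^2)$, where $\bar\tau_l^i=\max_{0\le t\le w}\tau_l^i(t)$. Then the orbit $t\mapsto\bar P^i(t,\varphi)$ of the mosquito system described in the context is precompact.
   Context: Let $w>0$; for patch $i$, $\mu_b^i,\mu_l^i,\mu_m^i,K^i,\tau_l^i$ are positive continuous $w$-periodic functions on $\mathbb{R}$, $\tau_l^i$ continuously differentiable, $K^i$ bounded. The mosquito system of patch $i$ is $\dot L_s^i=\mu_b^i(t)\big(1-\frac{L_s^i(t)}{K^i(t)}\big)S_m^i(t)-\mu_l^i(t)L_s^i(t)$, $\dot S_m^i=(1-\dot\tau_l^i(t))\mu_b^i(t-\tau_l^i(t))\big(1-\frac{L_s^i(t-\tau_l^i(t))}{K^i(t-\tau_l^i(t))}\big)S_m^i(t-\tau_l^i(t))e^{-\int_{t-\tau_l^i(t)}^t\mu_l^i(s)ds}-\mu_m^i(t)S_m^i(t)$. $\bar P^i(t,\varphi)\in\mathcal{I}_1^{i+}$ denotes the state (history segment on $[-\bar\tau_l^i,0]$) at time $t\ge0$ of the unique solution of this system with initial history $\varphi$ for $(L_s^i,S_m^i)$. *)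

theory Defs
  imports "HOL-Analysis.Analysis"
begin

definition clamp_hist :: "real \<Rightarrow> real \<Rightarrow> real" where
  "clamp_hist r s = max (- r) (min 0 s)"

text \<open>History segment x_t restricted to [-r,0], viewed as an element of the
  sup-normed Banach space of bounded continuous functions (extended constantly
  outside [-r,0]; this is an isometric copy of C([-r,0], R^2)).\<close>
definition hist_seg :: "real \<Rightarrow> (real \<Rightarrow> real \<times> real) \<Rightarrow> real \<Rightarrow> (real \<Rightarrow>\<^sub>C (real \<times> real))" where
  "hist_seg r x t = Bcontfun (\<lambda>s. x (t + clamp_hist r s))"

definition periodic_fun :: "real \<Rightarrow> (real \<Rightarrow> real) \<Rightarrow> bool" where
  "periodic_fun w f \<longleftrightarrow> (\<forall>t. f (t + w) = f t)"

end

theory Submission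
  imports Defs "HOL-Complex_Analysis.Great_Picard"
begin



lemma periodic_nat:
  assumes "periodic_fun w f" shows "f (t + real n * w) = f t"
proof (induction n)
  case 0 then show ?case by simp
next
  case (Suc n)
  have "f (t + real (Suc n) * w) = f ((t + real n * w) + w)" by (simp add: algebra_simps)
  also have "\<dots> = f (t + real n * w)" using assms unfolding periodic_fun_def by blast
  finally show ?case using Suc by simp
qed

lemma periodic_int:
  assumes "periodic_fun w f" shows "f (t + real_of_int k * w) = f t"
proof (cases "k \<ge> 0")
  case True
  then obtain n where "k = int n" using nonneg_int_cases by blast
  then show ?thesis using periodic_nat[OF assms] by simp
next
  case False
  then have "- k \<ge> 0" by simp
  then obtain n where "- k = int n" using nonneg_int_cases by blast
  then have n: "k = - int n" by simp
  have "f ((t - real n * w) + real n * w) = f (t - real n * w)" using periodic_nat[OF assms] by blast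
  then show ?thesis using n by simp
qed

lemma periodic_reduce:
  assumes "periodic_fun w f" "w > 0"
  shows "\<exists>s\<in>{0..w}. f t = f s"
proof -
  define k where "k = \<lfloor>t / w\<rfloor>"
  define s where "s = t - real_of_int k * w"
  have "real_of_int k \<le> t / w" "t / w < real_of_int k + 1" unfolding k_def
    by (rule of_int_floor_le, rule real_of_int_floor_add_one_gt)
  then have "real_of_int k * w \<le> t" "t < (real_of_int k + 1) * w"
    using assms(2) by (simp_all add: field_simps)
  then have "s \<in> {0..w}" unfolding s_def by (auto simp: algebra_simps)
  moreover have "f s = f t" using periodic_int[OF assms(1), of s k] unfolding s_def by simp
  ultimately show ?thesis by (intro bexI[of _ s]) auto
qed

lemma periodic_bounds:
  assumes "periodic_fun w f" "w > 0" "continuous_on UNIV f"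
  obtains a b where "\<And>t. f a \<le> f t" "\<And>t. f t \<le> f b"
proof -
  have c: "continuous_on {0..w} f" using assms(3) continuous_on_subset by blast
  obtain a where a: "a \<in> {0..w}" "\<And>x. x \<in> {0..w} \<Longrightarrow> f a \<le> f x"
    using continuous_attains_inf[OF compact_Icc _ c] assms(2) by fastforce
  obtain b where b: "b \<in> {0..w}" "\<And>x. x \<in> {0..w} \<Longrightarrow> f x \<le> f b"
    using continuous_attains_sup[OF compact_Icc _ c] assms(2) by fastforce
  have h: "f a \<le> f t \<and> f t \<le> f b" for t
  proof -
    obtain s where "s \<in> {0..w}" "f t = f s" using periodic_reduce[OF assms(1,2)] by blast
    then show ?thesis using a b by auto
  qed
  show ?thesis using h by (intro that[of a b]) auto
qed



lemma cmp_bound: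
  fixes f f' :: "real \<Rightarrow> real"
  assumes cf: "continuous_on {a..} f"
    and df: "\<And>t. t > a \<Longrightarrow> (f has_real_derivative f' t) (at t)"
    and neg: "\<And>t. t > a \<Longrightarrow> f t > M \<Longrightarrow> f' t \<le> 0"
    and ta: "t \<ge> a"
  shows "f t \<le> max (f a) M"
proof (rule ccontr)
  define c where "c = max (f a) M"
  assume "\<not> f t \<le> max (f a) M"
  then have ft: "f t > c" unfolding c_def by auto
  then have "t \<noteq> a" unfolding c_def by auto
  with ta have ta': "a < t" by simp
  have cft: "continuous_on {a..t} f" using cf continuous_on_subset by fastforce
  define A where "A = {x\<in>{a..t}. f x \<le> c}"
  have "closed A" unfolding A_def
    by (rule continuous_on_closed_Collect_le[OF cft continuous_on_const closed_atLeastAtMost])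
  moreover have "a \<in> A" unfolding A_def c_def using ta by auto
  moreover have "bdd_above A" unfolding A_def by (auto intro: bdd_aboveI[of _ t])
  ultimately have sA: "Sup A \<in> A" using closed_contains_Sup by blast
  define s where "s = Sup A"
  have As: "\<And>x. x \<in> A \<Longrightarrow> x \<le> s" unfolding s_def using \<open>bdd_above A\<close> by (simp add: cSup_upper)
  have s: "a \<le> s" "s \<le> t" "f s \<le> c" using sA unfolding s_def A_def by auto
  have "s \<noteq> t" using s(3) ft by auto
  have gt: "f x > c" if "s < x" "x \<le> t" for x
  proof (rule ccontr)
    assume "\<not> c < f x"
    then have "x \<in> A" unfolding A_def using that s by auto
    then show False using As that by fastforce
  qed
  have "f t \<le> f s"
  proof (rule DERIV_nonpos_imp_decreasing_open[of s t f])
    show "s \<le> t" by (rule s(2))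
    show "\<exists>y. (f has_real_derivative y) (at x) \<and> y \<le> 0" if "s < x" "x < t" for x
      using df[of x] neg[of x] gt[of x] that s unfolding c_def by force
    show "continuous_on {s..t} f" using cft continuous_on_subset s by fastforce
  qed
  then show False using s ft by linarith
qed



lemma cont_bound:
  fixes f :: "real \<Rightarrow> real"
  assumes "continuous_on {a..b} f"
  obtains B where "\<And>t. t \<in> {a..b} \<Longrightarrow> \<bar>f t\<bar> \<le> B"
proof -
  have "bounded (f ` {a..b})"
    by (rule compact_imp_bounded[OF compact_continuous_image[OF assms compact_Icc]])
  then obtain B where "\<forall>x\<in>f ` {a..b}. norm x \<le> B" by (auto simp: bounded_iff)
  then show ?thesis using that by force
qed

lemma abs_mult_le:
  fixes a b A B :: real
  assumes "\<bar>a\<bar> \<le> A" "\<bar>b\<bar> \<le> B"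
  shows "\<bar>a * b\<bar> \<le> A * B"
  unfolding abs_mult using assms by (intro mult_mono) auto

lemma lip_bound:
  fixes f f' :: "real \<Rightarrow> real"
  assumes cf: "continuous_on {a..} f"
    and df: "\<And>t. t > a \<Longrightarrow> (f has_real_derivative f' t) (at t)"
    and bd: "\<And>t. t > a \<Longrightarrow> \<bar>f' t\<bar> \<le> D"
    and "a \<le> x" "x \<le> y"
  shows "\<bar>f y - f x\<bar> \<le> D * (y - x)"
proof (cases "x = y")
  case True then show ?thesis by simp
next
  case False
  then have xy: "x < y" using assms by simp
  have "continuous_on {x..y} f" by (rule continuous_on_subset[OF cf]) (use assms in auto)
  moreover have "f differentiable (at z)" if "x < z" "z < y" for z
  proof -
    have "a < z" using that assms by simp
    then show ?thesis unfolding real_differentiable_def using df by blast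
  qed
  ultimately obtain l z where z: "x < z" "z < y" "DERIV f z :> l" "f y - f x = (y - x) * l"
    using MVT[OF xy] by blast
  have "l = f' z" using DERIV_unique[OF z(3) df[of z]] z assms by simp
  then have "\<bar>l\<bar> \<le> D" using bd[of z] z assms by simp
  moreover have "\<bar>f y - f x\<bar> = (y - x) * \<bar>l\<bar>" using z(4) xy by (simp add: abs_mult)
  ultimately show ?thesis using xy by (simp add: mult.commute mult_left_mono)
qed

lemma lip_bound_sym:
  fixes f f' :: "real \<Rightarrow> real"
  assumes cf: "continuous_on {a..} f"
    and df: "\<And>t. t > a \<Longrightarrow> (f has_real_derivative f' t) (at t)"
    and bd: "\<And>t. t > a \<Longrightarrow> \<bar>f' t\<bar> \<le> D"
    and "a \<le> x" "a \<le> y"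
  shows "\<bar>f y - f x\<bar> \<le> D * \<bar>y - x\<bar>"
proof (cases "x \<le> y")
  case True then show ?thesis using lip_bound[OF cf df bd, of x y] assms by simp
next
  case False then show ?thesis using lip_bound[OF cf df bd, of y x] assms by (simp add: abs_minus_commute)
qed

lemma dist_pair_le:
  fixes a b c d :: real
  shows "dist (a, b) (c, d) \<le> \<bar>a - c\<bar> + \<bar>b - d\<bar>"
proof -
  have "dist (a, b) (c, d) = norm (a - c, b - d)" by (simp add: dist_norm)
  also have "\<dots> \<le> norm (a - c) + norm (b - d)" by (rule norm_Pair_le)
  finally show ?thesis by simp
qed

lemma clamp_in: "r \<ge> 0 \<Longrightarrow> clamp_hist r s \<in> {-r..0}"
  unfolding clamp_hist_def by auto

lemma clamp_id: "s \<in> {-r..0} \<Longrightarrow> clamp_hist r s = s"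
  unfolding clamp_hist_def by auto

lemma clamp_cont: "continuous_on UNIV (clamp_hist r)"
  unfolding clamp_hist_def by (intro continuous_intros)

lemma compact_closure_seq:
  fixes A :: "'a::metric_space set"
  assumes H: "\<And>y :: nat \<Rightarrow> 'a. (\<forall>n. y n \<in> A) \<Longrightarrow> \<exists>l r. strict_mono r \<and> (y \<circ> r) \<longlonglongrightarrow> l"
  shows "compact (closure A)"
  unfolding compact_eq_seq_compact_metric seq_compact_def
proof (intro allI impI)
  fix f :: "nat \<Rightarrow> 'a" assume f: "\<forall>n. f n \<in> closure A"
  have "\<forall>n. \<exists>y. y \<in> A \<and> dist y (f n) < inverse (real n + 1)"
  proof
    fix n
    have "inverse (real n + 1) > 0" by simp
    then show "\<exists>y. y \<in> A \<and> dist y (f n) < inverse (real n + 1)"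
      using f[rule_format, of n, unfolded closure_approachable] by blast
  qed
  then obtain y where y0: "\<forall>n. y n \<in> A \<and> dist (y n) (f n) < inverse (real n + 1)"
    unfolding choice_iff by blast
  then have y: "\<And>n. y n \<in> A" "\<And>n. dist (y n) (f n) < inverse (real n + 1)" by auto
  obtain l r where r: "strict_mono r" "(y \<circ> r) \<longlonglongrightarrow> l" using H[of y] y(1) by blast
  have "(f \<circ> r) \<longlonglongrightarrow> l"
  proof (rule metric_LIMSEQ_I)
    fix e :: real assume e: "e > 0"
    obtain N1 where N1: "\<And>n. n \<ge> N1 \<Longrightarrow> dist ((y \<circ> r) n) l < e / 2"
      using metric_LIMSEQ_D[OF r(2), of "e/2"] e by auto
    obtain N2 where N2: "inverse (real (Suc N2)) < e / 2"
      using reals_Archimedean[of "e/2"] e by auto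
    show "\<exists>N. \<forall>n\<ge>N. dist ((f \<circ> r) n) l < e"
    proof (intro exI allI impI)
      fix n assume n: "n \<ge> max N1 N2"
      have "r n \<ge> n" using seq_suble[OF r(1)] by blast
      then have "real (r n) + 1 \<ge> real (Suc N2)" using n by simp
      then have "inverse (real (r n) + 1) \<le> inverse (real (Suc N2))"
        by (intro le_imp_inverse_le) auto
      then have "dist (y (r n)) (f (r n)) < e / 2" using y(2)[of "r n"] N2 by linarith
      moreover have "dist (y (r n)) l < e / 2" using N1[of n] n by simp
      ultimately show "dist ((f \<circ> r) n) l < e"
        using dist_triangle[of "f (r n)" l "y (r n)"] by (simp add: dist_commute)
    qed
  qed
  moreover have "l \<in> closure A"
    unfolding closure_sequential using y(1) r(2) by (intro exI[of _ "y \<circ> r"]) auto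
  ultimately show "\<exists>l\<in>closure A. \<exists>r. strict_mono r \<and> (f \<circ> r) \<longlonglongrightarrow> l"
    using r(1) by blast
qed



theorem lemma3p8:
  fixes w :: real
    and mub mul mum K tau tau' :: "real \<Rightarrow> real"
    and phi :: "real \<Rightarrow> real \<times> real"
    and L S :: "real \<Rightarrow> real"
  assumes w_pos: "w > 0"
    and per: "periodic_fun w mub" "periodic_fun w mul" "periodic_fun w mum"
             "periodic_fun w K" "periodic_fun w tau"
    and cont: "continuous_on UNIV mub" "continuous_on UNIV mul" "continuous_on UNIV mum"
              "continuous_on UNIV K" "continuous_on UNIV tau"
    and pos: "\<And>t. mub t > 0" "\<And>t. mul t > 0" "\<And>t. mum t > 0" "\<And>t. K t > 0" "\<And>t. tau t > 0"
    and tau_C1: "\<And>t. (tau has_real_derivative tau' t) (at t)" "continuous_on UNIV tau'"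
    and K_bdd: "bounded (range K)"
    and phi_cont: "continuous_on {- (SUP t\<in>{0..w}. tau t)..0} phi"
    and phi_nonneg: "\<And>s. s \<in> {- (SUP t\<in>{0..w}. tau t)..0} \<Longrightarrow> fst (phi s) \<ge> 0 \<and> snd (phi s) \<ge> 0"
    and init: "\<And>s. s \<in> {- (SUP t\<in>{0..w}. tau t)..0} \<Longrightarrow> L s = fst (phi s) \<and> S s = snd (phi s)"
    and sol_cont: "continuous_on {- (SUP t\<in>{0..w}. tau t)..} L"
                  "continuous_on {- (SUP t\<in>{0..w}. tau t)..} S"
    and sol_nonneg: "\<And>t. t \<ge> - (SUP t\<in>{0..w}. tau t) \<Longrightarrow> L t \<ge> 0 \<and> S t \<ge> 0"
    and eqL: "\<And>t. t > 0 \<Longrightarrow>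
       (L has_real_derivative
          (mub t * (1 - L t / K t) * S t - mul t * L t)) (at t)"
    and eqS: "\<And>t. t > 0 \<Longrightarrow>
       (S has_real_derivative
          ((1 - tau' t) * mub (t - tau t) * (1 - L (t - tau t) / K (t - tau t)) * S (t - tau t)
             * exp (- integral {t - tau t..t} mul)
           - mum t * S t)) (at t)"
  shows "compact (closure
           ((\<lambda>t. hist_seg (SUP t\<in>{0..w}. tau t) (\<lambda>s. (L s, S s)) t) ` {0..}))"
proof -
  define r where "r = (SUP t\<in>{0..w}. tau t)"
  have contL: "continuous_on {-r..} L" and contS: "continuous_on {-r..} S"
    using sol_cont unfolding r_def by auto
  have nonneg: "\<And>t. t \<ge> -r \<Longrightarrow> L t \<ge> 0 \<and> S t \<ge> 0" using sol_nonneg unfolding r_def by auto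
  have bddtau: "bdd_above (tau ` {0..w})"
    by (rule bounded_imp_bdd_above[OF compact_imp_bounded[OF compact_continuous_image[OF
          continuous_on_subset[OF cont(5)] compact_Icc]]]) simp
  have tau_le: "tau t \<le> r" for t
  proof -
    obtain s where s: "s \<in> {0..w}" "tau t = tau s" using periodic_reduce[OF per(5) w_pos] by blast
    show ?thesis unfolding r_def s(2) by (rule cSUP_upper[OF s(1) bddtau])
  qed
  have r_pos: "r > 0" using tau_le[of 0] pos(5)[of 0] by linarith
  obtain a1 b1 where mubB: "\<And>t. mub t \<le> mub b1" using periodic_bounds[OF per(1) w_pos cont(1)] by metis
  obtain a2 b2 where mulB: "\<And>t. mul t \<le> mul b2" using periodic_bounds[OF per(2) w_pos cont(2)] by metis
  obtain a3 b3 where mumB: "\<And>t. mum a3 \<le> mum t" "\<And>t. mum t \<le> mum b3"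
    using periodic_bounds[OF per(3) w_pos cont(3)] by metis
  obtain a4 b4 where KB: "\<And>t. K a4 \<le> K t" "\<And>t. K t \<le> K b4"
    using periodic_bounds[OF per(4) w_pos cont(4)] by metis
  have per': "periodic_fun w tau'" unfolding periodic_fun_def
  proof
    fix t
    have e: "(\<lambda>x. tau (x + w)) = tau" using per(5) unfolding periodic_fun_def by auto
    have "((\<lambda>x. tau (x + w)) has_real_derivative tau' (t + w)) (at t)"
      using tau_C1(1)[of "t + w"] DERIV_shift by blast
    then have "(tau has_real_derivative tau' (t + w)) (at t)" unfolding e .
    then show "tau' (t + w) = tau' t" using DERIV_unique tau_C1(1) by blast
  qed
  obtain a5 b5 where tauB: "\<And>t. tau' a5 \<le> tau' t" "\<And>t. tau' t \<le> tau' b5"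
    using periodic_bounds[OF per' w_pos tau_C1(2)] by metis
  define Mb where "Mb = mub b1"
  define Ml where "Ml = mul b2"
  define m where "m = mum a3"
  define Mm where "Mm = mum b3"
  define kmin where "kmin = K a4"
  define Kmax where "Kmax = K b4"
  define T1 where "T1 = \<bar>tau' a5\<bar> + \<bar>tau' b5\<bar>"
  have Mb: "\<And>t. mub t \<le> Mb" "Mb > 0" unfolding Mb_def using mubB pos by auto
  have Ml: "\<And>t. mul t \<le> Ml" "Ml > 0" unfolding Ml_def using mulB pos by auto
  have Mm: "\<And>t. m \<le> mum t" "\<And>t. mum t \<le> Mm" "m > 0" "Mm > 0" unfolding Mm_def m_def using mumB pos by auto
  have Kb: "\<And>t. kmin \<le> K t" "\<And>t. K t \<le> Kmax" "kmin > 0" "Kmax > 0"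
    unfolding kmin_def Kmax_def using KB pos by auto
  have T1: "\<And>t. \<bar>tau' t\<bar> \<le> T1" unfolding T1_def using tauB by (smt (verit))
  have Lpos0: "L t \<le> max (L 0) Kmax" if "t \<ge> 0" for t
  proof (rule cmp_bound[of 0 L "\<lambda>t. mub t * (1 - L t / K t) * S t - mul t * L t" Kmax t])
    show "continuous_on {0..} L" by (rule continuous_on_subset[OF contL]) (use r_pos in auto)
    show "(L has_real_derivative mub t * (1 - L t / K t) * S t - mul t * L t) (at t)" if "t > 0" for t
      using eqL that by blast
    show "mub t * (1 - L t / K t) * S t - mul t * L t \<le> 0" if "t > 0" "L t > Kmax" for t
    proof -
      have "K t < L t" using Kb(2)[of t] that by linarith
      then have "L t / K t > 1" using Kb(3) Kb(1)[of t] by (simp add: pos_less_divide_eq)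
      then have "mub t * (1 - L t / K t) < 0" using pos(1)[of t] by (simp add: mult_pos_neg)
      then have "mub t * (1 - L t / K t) * S t \<le> 0" using nonneg[of t] that r_pos
        mult_nonpos_nonneg[of "mub t * (1 - L t / K t)" "S t"] by auto
      moreover have "mul t * L t > 0" using pos(2)[of t] that Kb(4) by simp
      ultimately show ?thesis by linarith
    qed
  qed (use that in auto)
  obtain BL0 where BL0: "\<And>t. t \<in> {-r..0} \<Longrightarrow> \<bar>L t\<bar> \<le> BL0"
    using cont_bound[OF continuous_on_subset[OF contL], of "-r" 0] by auto
  define CL where "CL = max (max (L 0) Kmax) BL0"
  have CL: "\<And>t. t \<ge> -r \<Longrightarrow> 0 \<le> L t \<and> L t \<le> CL"
  proof -
    fix t :: real assume t: "t \<ge> -r"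
    show "0 \<le> L t \<and> L t \<le> CL"
    proof (cases "t \<ge> 0")
      case True then show ?thesis using Lpos0[of t] nonneg[of t] t unfolding CL_def by auto
    next
      case False then show ?thesis using BL0[of t] nonneg[of t] t unfolding CL_def by auto
    qed
  qed
  have CLpos: "CL > 0" unfolding CL_def using Kb(4) by auto
  define P where "P x = integral {0..x} mul" for x
  have mulc: "continuous_on A mul" for A using continuous_on_subset[OF cont(2)] by blast
  have Pd: "(P has_real_derivative mul x) (at x)" if "x > 0" for x
  proof -
    have "(P has_real_derivative mul x) (at x within {0..x+1})"
      unfolding P_def by (rule integral_has_real_derivative[OF mulc]) (use that in auto)
    moreover have "at x within {0..x+1} = at x" by (rule at_within_interior) (use that in auto)
    ultimately show ?thesis by simp
  qed
  have Pint: "integral {a..b} mul = P b - P a" if "0 \<le> a" "a \<le> b" for a b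
  proof -
    have "integral {0..a} mul + integral {a..b} mul = integral {0..b} mul"
      using Henstock_Kurzweil_Integration.integral_combine[where f=mul and a=0 and c=a and b=b] that integrable_continuous_interval[OF mulc, of 0 b] by simp
    then show ?thesis unfolding P_def by simp
  qed
  have intnn: "integral {a..b} mul \<ge> 0" for a b
    by (rule integral_nonneg[OF integrable_continuous_interval[OF mulc]]) (use pos(2) less_imp_le in auto)
  define u where "u s = s - tau s" for s
  have ud: "(u has_real_derivative (1 - tau' s)) (at s)" for s
    unfolding u_def by (rule DERIV_diff[OF DERIV_ident tau_C1(1)])
  have u_ge: "u s \<ge> s - r" for s unfolding u_def using tau_le[of s] by simp
  have u_le: "u s \<le> s" for s unfolding u_def using pos(5)[of s] by simp
  define E where "E s = exp (P (u s) - P s)" for s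
  define Y where "Y s = L (u s) * E s" for s
  define Lp where "Lp x = mub x * (1 - L x / K x) * S x - mul x * L x" for x
  define R where "R s = (1 - tau' s) * mub (u s) * (1 - L (u s) / K (u s)) * S (u s) * E s" for s
  have Eint: "exp (- integral {u s..s} mul) = E s" if "s > r" for s
    using Pint[of "u s" s] u_ge[of s] u_le[of s] that unfolding E_def by simp
  have E01: "0 < E s \<and> E s \<le> 1" if "s > r" for s
    using Eint[OF that] intnn[of "u s" s] by (metis exp_gt_zero exp_le_one_iff neg_le_0_iff_le)
  have Yd: "(Y has_real_derivative (R s - mul s * Y s)) (at s)" if "s > r" for s
  proof -
    have us: "u s > 0" using u_ge[of s] that by linarith
    have d1: "((\<lambda>s. L (u s)) has_real_derivative Lp (u s) * (1 - tau' s)) (at s)"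
      using DERIV_chain2[OF eqL[OF us] ud] unfolding Lp_def by simp
    have d2: "((\<lambda>s. P (u s) - P s) has_real_derivative mul (u s) * (1 - tau' s) - mul s) (at s)"
      using DERIV_diff[OF DERIV_chain2[OF Pd[OF us] ud] Pd[of s]] that r_pos by simp
    have d3: "(E has_real_derivative E s * (mul (u s) * (1 - tau' s) - mul s)) (at s)"
      using DERIV_chain2[OF DERIV_exp d2] unfolding E_def by simp
    have "(Y has_real_derivative Lp (u s) * (1 - tau' s) * E s + E s * (mul (u s) * (1 - tau' s) - mul s) * L (u s)) (at s)"
      using DERIV_mult[OF d1 d3] unfolding Y_def by simp
    then show ?thesis
      by (rule DERIV_cong) (use pos(4)[of "u s"] in \<open>simp add: R_def Y_def Lp_def field_simps\<close>)
  qed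
  have Sd: "(S has_real_derivative (R s - mum s * S s)) (at s)" if "s > r" for s
    using eqS[of s] that r_pos Eint[OF that] unfolding R_def u_def by simp
  define Z where "Z s = S s - Y s" for s
  define Zd where "Zd s = - mum s * Z s + (mul s - mum s) * Y s" for s
  have Zdd: "(Z has_real_derivative Zd s) (at s)" if "s > r" for s
    using DERIV_diff[OF Sd[OF that] Yd[OF that]] unfolding Z_def[abs_def]
    by (rule DERIV_cong) (simp add: Zd_def Z_def algebra_simps)
  have Ybound: "\<bar>Y s\<bar> \<le> CL" if "s > r" for s
  proof -
    have "\<bar>L (u s)\<bar> \<le> CL" using CL[of "u s"] u_ge[of s] that r_pos by auto
    moreover have "\<bar>E s\<bar> \<le> 1" using E01[OF that] by simp
    ultimately show ?thesis unfolding Y_def using abs_mult_le by fastforce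
  qed
  define k0 where "k0 = (Ml + Mm) * CL"
  have k0pos: "k0 > 0" unfolding k0_def using Ml Mm CLpos by simp
  have mixb: "(mul s - mum s) * Y s \<le> k0 \<and> - ((mul s - mum s) * Y s) \<le> k0" if "s > r" for s
  proof -
    have "\<bar>mul s - mum s\<bar> \<le> Ml + Mm" using Ml(1)[of s] Mm(2)[of s] pos(2)[of s] pos(3)[of s] by linarith
    then have "\<bar>(mul s - mum s) * Y s\<bar> \<le> k0" unfolding k0_def using abs_mult_le Ybound[OF that] by blast
    then show ?thesis by linarith
  qed
  have Zup: "Z t \<le> max (Z (r+1)) (k0/m)" if "t \<ge> r+1" for t
  proof (rule cmp_bound[of "r+1" Z Zd "k0/m" t])
    show "continuous_on {r+1..} Z"
      by (rule continuous_at_imp_continuous_on) (use DERIV_isCont Zdd in force)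
    show "(Z has_real_derivative Zd s) (at s)" if "s > r+1" for s using Zdd that by simp
    show "Zd s \<le> 0" if "s > r+1" "Z s > k0/m" for s
    proof -
      have "k0 < Z s * m" using that(2) Mm(3) by (simp add: pos_divide_less_eq)
      moreover have "Z s > 0" using that(2) k0pos Mm(3) by (smt (verit) divide_pos_pos)
      then have "m * Z s \<le> mum s * Z s" using Mm(1)[of s] by (simp add: mult_right_mono)
      ultimately show ?thesis unfolding Zd_def using mixb[of s] that by (simp add: mult.commute)
    qed
  qed (use that in auto)
  have Zlow: "- Z t \<le> max (- Z (r+1)) (k0/m)" if "t \<ge> r+1" for t
  proof (rule cmp_bound[of "r+1" "\<lambda>s. - Z s" "\<lambda>s. - Zd s" "k0/m" t])
    show "continuous_on {r+1..} (\<lambda>s. - Z s)"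
      by (rule continuous_at_imp_continuous_on) (use DERIV_isCont DERIV_minus Zdd in force)
    show "((\<lambda>s. - Z s) has_real_derivative - Zd s) (at s)" if "s > r+1" for s
      by (rule DERIV_minus[OF Zdd]) (use that in simp)
    show "- Zd s \<le> 0" if "s > r+1" "- Z s > k0/m" for s
    proof -
      have "k0 < - Z s * m" using that(2) Mm(3) by (simp add: pos_divide_less_eq)
      moreover have "Z s < 0" using that(2) k0pos Mm(3) by (smt (verit) divide_pos_pos)
      then have "mum s * Z s \<le> m * Z s" using Mm(1)[of s] by (simp add: mult_right_mono_neg)
      ultimately show ?thesis unfolding Zd_def using mixb[of s] that by (simp add: mult.commute)
    qed
  qed (use that in auto)
  obtain BS0 where BS0: "\<And>t. t \<in> {-r..r+1} \<Longrightarrow> \<bar>S t\<bar> \<le> BS0"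
    using cont_bound[OF continuous_on_subset[OF contS], of "-r" "r+1"] by auto
  define CS where "CS = max (\<bar>Z (r+1)\<bar> + k0/m + CL) BS0"
  have CS: "\<And>t. t \<ge> -r \<Longrightarrow> 0 \<le> S t \<and> S t \<le> CS"
  proof -
    fix t :: real assume t: "t \<ge> -r"
    show "0 \<le> S t \<and> S t \<le> CS"
    proof (cases "t \<ge> r + 1")
      case True
      have "S t = Z t + Y t" unfolding Z_def by simp
      moreover have "\<bar>Y t\<bar> \<le> CL" using Ybound[of t] True r_pos by simp
      moreover have "0 \<le> S t" using nonneg[of t] t by simp
      moreover have "Z t \<le> max (Z (r+1)) (k0/m)" using Zup[OF True] .
      moreover have "k0/m \<ge> 0" using k0pos Mm(3) by simp
      ultimately show ?thesis unfolding CS_def by (smt (verit))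
    next
      case False then show ?thesis using BS0[of t] nonneg[of t] t unfolding CS_def by auto
    qed
  qed
  have CSpos: "CS \<ge> 0" using CS[of 0] r_pos by simp
  define Q where "Q = 1 + CL / kmin"
  have CLk: "CL / kmin \<ge> 0" using CLpos Kb(3) by simp
  have ratio: "\<bar>1 - L x / K x\<bar> \<le> Q" if "x \<ge> -r" for x
  proof -
    have "L x / K x \<le> CL / kmin" using CL[OF that] Kb(1)[of x] Kb(3) by (intro frac_le) auto
    moreover have "L x / K x \<ge> 0" using CL[OF that] pos(4)[of x] by simp
    ultimately show ?thesis unfolding Q_def using CLk by (simp add: abs_le_iff)
  qed
  have Qpos: "Q \<ge> 0" unfolding Q_def using CLk by simp
  define DL where "DL = Mb * Q * CS + Ml * CL"
  define DS where "DS = (1 + T1) * Mb * Q * CS * 1 + Mm * CS"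
  have DLb: "\<bar>mub t * (1 - L t / K t) * S t - mul t * L t\<bar> \<le> DL" if "t > 0" for t
  proof -
    have t: "t \<ge> -r" using that r_pos by simp
    have "\<bar>mub t\<bar> \<le> Mb" using Mb(1)[of t] pos(1)[of t] by simp
    then have "\<bar>mub t * (1 - L t / K t)\<bar> \<le> Mb * Q" using abs_mult_le ratio[OF t] by blast
    moreover have "\<bar>S t\<bar> \<le> CS" using CS[OF t] by simp
    ultimately have 1: "\<bar>mub t * (1 - L t / K t) * S t\<bar> \<le> Mb * Q * CS" using abs_mult_le by blast
    have "\<bar>mul t\<bar> \<le> Ml" using Ml(1)[of t] pos(2)[of t] by simp
    moreover have "\<bar>L t\<bar> \<le> CL" using CL[OF t] by simp
    ultimately have 2: "\<bar>mul t * L t\<bar> \<le> Ml * CL" using abs_mult_le by blast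
    show ?thesis using 1 2 abs_triangle_ineq4[of "mub t * (1 - L t / K t) * S t" "mul t * L t"]
      unfolding DL_def by linarith
  qed
  have DSb: "\<bar>(1 - tau' t) * mub (t - tau t) * (1 - L (t - tau t) / K (t - tau t)) * S (t - tau t)
             * exp (- integral {t - tau t..t} mul) - mum t * S t\<bar> \<le> DS" if "t > 0" for t
  proof -
    have t: "t \<ge> -r" using that r_pos by simp
    have t': "t - tau t \<ge> -r" using tau_le[of t] that by simp
    have "\<bar>1 - tau' t\<bar> \<le> 1 + T1" using T1[of t] by linarith
    moreover have "\<bar>mub (t - tau t)\<bar> \<le> Mb" using Mb(1) pos(1) by (simp add: less_imp_le)
    ultimately have "\<bar>(1 - tau' t) * mub (t - tau t)\<bar> \<le> (1 + T1) * Mb" using abs_mult_le by blast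
    then have "\<bar>(1 - tau' t) * mub (t - tau t) * (1 - L (t - tau t) / K (t - tau t))\<bar> \<le> (1 + T1) * Mb * Q"
      using abs_mult_le ratio[OF t'] by blast
    moreover have "\<bar>S (t - tau t)\<bar> \<le> CS" using CS[OF t'] by simp
    ultimately have "\<bar>(1 - tau' t) * mub (t - tau t) * (1 - L (t - tau t) / K (t - tau t)) * S (t - tau t)\<bar>
        \<le> (1 + T1) * Mb * Q * CS" using abs_mult_le by blast
    moreover have "\<bar>exp (- integral {t - tau t..t} mul)\<bar> \<le> 1" using intnn[of "t - tau t" t] by simp
    ultimately have 1: "\<bar>(1 - tau' t) * mub (t - tau t) * (1 - L (t - tau t) / K (t - tau t)) * S (t - tau t)
             * exp (- integral {t - tau t..t} mul)\<bar> \<le> (1 + T1) * Mb * Q * CS * 1" using abs_mult_le by blast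
    have "\<bar>mum t\<bar> \<le> Mm" using Mm(2)[of t] pos(3)[of t] by simp
    moreover have "\<bar>S t\<bar> \<le> CS" using CS[OF t] by simp
    ultimately have 2: "\<bar>mum t * S t\<bar> \<le> Mm * CS" using abs_mult_le by blast
    show ?thesis using 1 2 abs_triangle_ineq4 unfolding DS_def by (smt (verit))
  qed
  have DLpos: "DL \<ge> 0" using DLb[of 1] by simp
  have DSpos: "DS \<ge> 0" using DSb[of 1] by simp
  have contL0: "continuous_on {0..} L" by (rule continuous_on_subset[OF contL]) (use r_pos in auto)
  have contS0: "continuous_on {0..} S" by (rule continuous_on_subset[OF contS]) (use r_pos in auto)
  have lipL: "\<bar>L b - L a\<bar> \<le> DL * \<bar>b - a\<bar>" if "a \<ge> 0" "b \<ge> 0" for a b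
    by (rule lip_bound_sym[OF contL0 eqL DLb]) (use that in auto)
  have lipS: "\<bar>S b - S a\<bar> \<le> DS * \<bar>b - a\<bar>" if "a \<ge> 0" "b \<ge> 0" for a b
    by (rule lip_bound_sym[OF contS0 eqS DSb]) (use that in auto)
  define X where "X s = (L s, S s)" for s
  have contX: "continuous_on {-r..} X" unfolding X_def by (intro continuous_on_Pair contL contS)
  have Xb: "norm (X s) \<le> CL + CS" if "s \<ge> -r" for s
  proof -
    have "norm (X s) \<le> norm (L s) + norm (S s)" unfolding X_def by (rule norm_Pair_le)
    then show ?thesis using CL[OF that] CS[OF that] by simp
  qed
  have ucX: "\<exists>d>0. \<forall>a b. -r \<le> a \<longrightarrow> -r \<le> b \<longrightarrow> \<bar>a - b\<bar> < d \<longrightarrow> dist (X a) (X b) < e"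
    if e: "e > 0" for e
  proof -
    have "uniformly_continuous_on {-r..1} X"
      by (rule compact_uniformly_continuous[OF continuous_on_subset[OF contX] compact_Icc]) auto
    then obtain d1 where d1: "d1 > 0" "\<And>x x'. x \<in> {-r..1} \<Longrightarrow> x' \<in> {-r..1} \<Longrightarrow> dist x' x < d1 \<Longrightarrow> dist (X x') (X x) < e"
      unfolding uniformly_continuous_on_def using e by metis
    define d where "d = min d1 (min 1 (e / (DL + DS + 1)))"
    have dpos: "d > 0" unfolding d_def using d1(1) e DLpos DSpos by simp
    have "dist (X a) (X b) < e" if ab: "-r \<le> a" "-r \<le> b" "\<bar>a - b\<bar> < d" for a b
    proof (cases "a < 0 \<or> b < 0")
      case True
      then have "a \<in> {-r..1}" "b \<in> {-r..1}" using ab unfolding d_def by auto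
      then show ?thesis using d1(2)[of b a] ab(3) unfolding d_def dist_real_def by auto
    next
      case False
      then have a0: "a \<ge> 0" "b \<ge> 0" by auto
      have "dist (X a) (X b) \<le> \<bar>L a - L b\<bar> + \<bar>S a - S b\<bar>" unfolding X_def by (rule dist_pair_le)
      also have "\<dots> \<le> DL * \<bar>a - b\<bar> + DS * \<bar>a - b\<bar>" using lipL[OF a0(2,1)] lipS[OF a0(2,1)] by simp
      also have "\<dots> \<le> (DL + DS + 1) * \<bar>a - b\<bar>" by (simp add: algebra_simps)
      also have "\<dots> < (DL + DS + 1) * (e / (DL + DS + 1))"
        using ab(3) DLpos DSpos unfolding d_def by (intro mult_strict_left_mono) auto
      also have "\<dots> = e" using DLpos DSpos by simp
      finally show ?thesis .
    qed
    then show ?thesis using dpos by blast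
  qed
  have hbc: "(\<lambda>s. X (t + clamp_hist r s)) \<in> bcontfun" if t: "t \<ge> 0" for t
  proof (rule bcontfun_normI)
    show "continuous_on UNIV (\<lambda>s. X (t + clamp_hist r s))"
    proof (rule continuous_on_compose2[OF contX])
      show "continuous_on UNIV (\<lambda>s. t + clamp_hist r s)"
        by (intro continuous_on_add continuous_on_const clamp_cont)
      show "(\<lambda>s. t + clamp_hist r s) ` UNIV \<subseteq> {-r..}"
      proof
        fix x assume "x \<in> (\<lambda>s. t + clamp_hist r s) ` UNIV"
        then obtain s where s: "x = t + clamp_hist r s" by auto
        have "clamp_hist r s \<ge> -r" using clamp_in[of r s] r_pos by simp
        then show "x \<in> {-r..}" using t s by simp
      qed
    qed
    show "norm (X (t + clamp_hist r s)) \<le> CL + CS" for s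
    proof -
      have "clamp_hist r s \<ge> -r" using clamp_in[of r s] r_pos by simp
      then show ?thesis using Xb[of "t + clamp_hist r s"] t by simp
    qed
  qed
  have happ: "apply_bcontfun (hist_seg r X t) s = X (t + clamp_hist r s)" if "t \<ge> 0" for t s
    unfolding hist_seg_def using Bcontfun_inverse[OF hbc[OF that]] by simp
  have "compact (closure ((\<lambda>t. hist_seg r X t) ` {0..}))"
  proof (rule compact_closure_seq)
    fix y :: "nat \<Rightarrow> real \<Rightarrow>\<^sub>C (real \<times> real)"
    assume "\<forall>n. y n \<in> (\<lambda>t. hist_seg r X t) ` {0..}"
    then have "\<forall>n. \<exists>t. t \<ge> 0 \<and> y n = hist_seg r X t" by auto
    then obtain tt where tt: "\<forall>n. tt n \<ge> 0 \<and> y n = hist_seg r X (tt n)" unfolding choice_iff by blast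
    define F where "F n s = X (tt n + s)" for n s
    obtain g k where g: "continuous_on {-r..0} g" and k: "strict_mono (k :: nat \<Rightarrow> nat)"
      and conv: "\<And>e. 0 < e \<Longrightarrow> \<exists>N. \<forall>n x. n \<ge> N \<and> x \<in> {-r..0} \<longrightarrow> norm (F (k n) x - g x) < e"
    proof (rule Arzela_Ascoli[of "{-r..0}" F "CL + CS"])
      show "compact {-r..0}" by simp
      show "norm (F n x) \<le> CL + CS" if xin: "x \<in> {-r..0}" for n x
      proof -
        have "tt n \<ge> 0" using tt by blast
        then have "tt n + x \<ge> -r" using xin by auto
        then show ?thesis unfolding F_def using Xb by blast
      qed
      show "\<exists>d>0. \<forall>n y. y \<in> {-r..0} \<and> norm (x - y) < d \<longrightarrow> norm (F n x - F n y) < e"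
        if xin: "x \<in> {-r..0}" and epos: "0 < e" for x e
      proof -
        obtain d where d: "d > 0" "\<forall>a b. -r \<le> a \<longrightarrow> -r \<le> b \<longrightarrow> \<bar>a - b\<bar> < d \<longrightarrow> dist (X a) (X b) < e"
          using ucX[OF epos] by blast
        have "norm (F n x - F n z) < e" if zin: "z \<in> {-r..0}" and xz: "norm (x - z) < d" for n z
        proof -
          have "tt n \<ge> 0" using tt by blast
          then have "tt n + x \<ge> -r" "tt n + z \<ge> -r" "\<bar>(tt n + x) - (tt n + z)\<bar> < d"
            using xin zin xz by auto
          then have "dist (X (tt n + x)) (X (tt n + z)) < e"
            using d(2) by blast
          then show ?thesis unfolding F_def dist_norm .
        qed
        then show ?thesis using d(1) by blast
      qed
    qed blast
    define G where "G s = g (clamp_hist r s)" for s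
    obtain Bg where Bg: "\<And>x. x \<in> {-r..0} \<Longrightarrow> norm (g x) \<le> Bg"
    proof -
      have "bounded (g ` {-r..0})"
        by (rule compact_imp_bounded[OF compact_continuous_image[OF g compact_Icc]])
      then obtain a where "\<forall>x\<in>{-r..0}. norm (g x) \<le> a" by (auto simp: bounded_iff)
      then show ?thesis using that by blast
    qed
    have Gbc: "G \<in> bcontfun"
    proof (rule bcontfun_normI)
      show "continuous_on UNIV G" unfolding G_def
        by (rule continuous_on_compose2[OF g clamp_cont]) (use clamp_in[OF less_imp_le[OF r_pos]] in auto)
      show "norm (G s) \<le> Bg" for s unfolding G_def using Bg clamp_in[of r s] r_pos by simp
    qed
    have "(y \<circ> k) \<longlonglongrightarrow> Bcontfun G"
    proof (rule metric_LIMSEQ_I)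
      fix e :: real assume e: "e > 0"
      obtain N where N: "\<forall>n x. n \<ge> N \<and> x \<in> {-r..0} \<longrightarrow> norm (F (k n) x - g x) < e/2"
        using conv[of "e/2"] e by auto
      have "dist ((y \<circ> k) n) (Bcontfun G) < e" if n: "n \<ge> N" for n
      proof -
        have "dist ((y \<circ> k) n) (Bcontfun G) \<le> e/2"
        proof (rule dist_bound)
          fix s
          have "apply_bcontfun ((y \<circ> k) n) s = F (k n) (clamp_hist r s)"
            using tt happ unfolding F_def by auto
          moreover have "apply_bcontfun (Bcontfun G) s = g (clamp_hist r s)"
            using Bcontfun_inverse[OF Gbc] unfolding G_def by simp
          moreover have "norm (F (k n) (clamp_hist r s) - g (clamp_hist r s)) < e/2"
            using N n clamp_in[of r s] r_pos by simp
          ultimately show "dist (apply_bcontfun ((y \<circ> k) n) s) (apply_bcontfun (Bcontfun G) s) \<le> e/2"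
            by (simp add: dist_norm)
        qed
        then show ?thesis using e by simp
      qed
      then show "\<exists>N. \<forall>n\<ge>N. dist ((y \<circ> k) n) (Bcontfun G) < e" by blast
    qed
    then show "\<exists>l r. strict_mono r \<and> (y \<circ> r) \<longlonglongrightarrow> l" using k by blast
  qed
  then show ?thesis unfolding r_def X_def .
qed

end
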